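(* Let $(X,d)$ be a complete metric space and $\{f_{\eta_k}:\eta_k\in B^{[k]},k\in\mathbb{N}\}$ a binary tree of continuous maps $X\to X$ sharing a common nonempty compact invariant set $C\subseteq X$ (i.e. $f_{\eta_k}(C)\subseteq C$ for all $\eta_k$), each $f_{\eta_k}$ Lipschitz with constant $s_{\eta_k}$. Assume there is a sequence $(\delta_k)$ with $\sum_{k=1}^\infty\delta_k<\infty$ such that $$\prod_{i=1}^k s_{\tau_i\eta}\le\delta_k\quad\text{for all }\eta\in B^{[\infty]},\ k\in\mathbb{N}.$$ Then for every $x\in C$, $$U_{TM}=\lim_{k\to\infty}\bigcup_{\eta\in B^{[\infty]}}f_{\tau_1\eta}\circ\cdots\circ f_{\tau_{k-1}\eta}\circ f_{\tau_k\eta}(x),$$ where the limit is taken in the Hausdorff metric $h$ on the nonempty compact subsets of $X$, and $U_{TM}=\bigcup_{\eta\in B^{[\infty]}}\gamma(\eta)$ with $\gamma(\eta)=\lim_{k\to\infty}f_{\tau_1\eta}\circ\cdots\circ f_{\tau_k\eta}(x)$.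
   Context: $B^{[k]}=\{1,2\}^k$, $B^{[\infty]}=\{1,2\}^{\mathbb{N}}$, and $\tau_\ell\eta$ denotes the first $\ell$ symbols of $\eta$. A binary tree of maps assigns to each finite code $\eta_k$ a continuous map $f_{\eta_k}:X\to X$. $h$ denotes the Hausdorff metric on the space $\mathbb{H}(X)$ of nonempty compact subsets of $X$. *)

theory Defs
  imports "HOL-Analysis.Analysis"
begin

definition fin_codes :: "nat \<Rightarrow> nat list set" where
  "fin_codes k = {w. length w = k \<and> set w \<subseteq> {1,2}}"

definition inf_codes :: "(nat \<Rightarrow> nat) set" where
  "inf_codes = {\<eta>. \<forall>n. \<eta> n \<in> {1,2}}"

definition tau :: "nat \<Rightarrow> (nat \<Rightarrow> nat) \<Rightarrow> nat list" where
  "tau l \<eta> = map \<eta> [0..<l]"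

text \<open>Forward composition  f_{tau 1 eta} o ... o f_{tau k eta}.\<close>
fun tree_comp :: "(nat list \<Rightarrow> 'a \<Rightarrow> 'a) \<Rightarrow> (nat \<Rightarrow> nat) \<Rightarrow> nat \<Rightarrow> 'a \<Rightarrow> 'a" where
  "tree_comp f \<eta> 0 = id"
| "tree_comp f \<eta> (Suc k) = tree_comp f \<eta> k \<circ> f (tau (Suc k) \<eta>)"

definition hausdorff_dist :: "'a::metric_space set \<Rightarrow> 'a set \<Rightarrow> real" where
  "hausdorff_dist A B = max (SUP a\<in>A. infdist a B) (SUP b\<in>B. infdist b A)"

end

theory Submission imports Defs begin

lemma tau_fin: "\<eta> \<in> inf_codes \<Longrightarrow> tau k \<eta> \<in> fin_codes k"
  by (auto simp: tau_def fin_codes_def inf_codes_def)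

lemma tc_lip:
  assumes lip: "\<And>k w. k \<ge> 1 \<Longrightarrow> w \<in> fin_codes k \<Longrightarrow> (s w)-lipschitz_on UNIV (f w)"
    and eta: "\<eta> \<in> inf_codes"
  shows "(\<Prod>i\<in>{1..k}. s (tau i \<eta>))-lipschitz_on UNIV (tree_comp f \<eta> k)"
proof (induction k)
  case 0
  then show ?case using lipschitz_on_id[of UNIV] by (simp add: id_def)
next
  case (Suc k)
  have l1: "(s (tau (Suc k) \<eta>))-lipschitz_on UNIV (f (tau (Suc k) \<eta>))"
    using lip[of "Suc k"] tau_fin[OF eta] by simp
  have l2: "(\<Prod>i\<in>{1..k}. s (tau i \<eta>))-lipschitz_on (f (tau (Suc k) \<eta>) ` UNIV) (tree_comp f \<eta> k)"
    using Suc.IH lipschitz_on_subset by blast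
  have "((\<Prod>i\<in>{1..k}. s (tau i \<eta>)) * s (tau (Suc k) \<eta>))-lipschitz_on UNIV (tree_comp f \<eta> k \<circ> f (tau (Suc k) \<eta>))"
    by (rule lipschitz_on_compose[OF l1 l2])
  moreover have "(\<Prod>i\<in>{1..Suc k}. s (tau i \<eta>)) = (\<Prod>i\<in>{1..k}. s (tau i \<eta>)) * s (tau (Suc k) \<eta>)"
    by (simp add: prod.nat_ivl_Suc')
  ultimately show ?case by simp
qed

lemma tc_C:
  assumes C_inv: "\<And>k w. k \<ge> 1 \<Longrightarrow> w \<in> fin_codes k \<Longrightarrow> f w ` C \<subseteq> C"
    and eta: "\<eta> \<in> inf_codes" and y: "y \<in> C"
  shows "tree_comp f \<eta> k y \<in> C"
  using y
proof (induction k arbitrary: y)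
  case 0 then show ?case by simp
next
  case (Suc k)
  have "f (tau (Suc k) \<eta>) ` C \<subseteq> C" by (rule C_inv[of "Suc k"]) (auto intro: tau_fin eta)
  then have "f (tau (Suc k) \<eta>) y \<in> C" using Suc.prems by blast
  then show ?case using Suc.IH by simp
qed

lemma tau_agree: "(\<And>i. i < k \<Longrightarrow> y i = \<eta> i) \<Longrightarrow> tau k y = tau k \<eta>"
  by (auto simp: tau_def)

lemma tc_agree:
  assumes "\<And>i. i < n \<Longrightarrow> y i = \<eta> i" "k \<le> n"
  shows "tree_comp f y k = tree_comp f \<eta> k"
  using assms(2)
proof (induction k)
  case 0 then show ?case by simp
next
  case (Suc k)
  have "tau (Suc k) y = tau (Suc k) \<eta>" by (rule tau_agree) (use assms Suc.prems in auto)
  then show ?case using Suc by simp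
qed

lemma tc_cont:
  fixes f :: "nat list \<Rightarrow> 'a::topological_space \<Rightarrow> 'a"
  shows "continuous_on S (\<lambda>\<eta>::nat\<Rightarrow>nat. tree_comp f \<eta> n x)"
  unfolding continuous_on_def
proof
  fix \<eta> :: "nat\<Rightarrow>nat" assume "\<eta> \<in> S"
  have op: "open {y::nat\<Rightarrow>nat. \<forall>i\<in>{..<n}. y (id i) \<in> {\<eta> i}}"
    by (rule product_topology_basis') (simp_all add: open_discrete)
  have "eventually (\<lambda>y. tree_comp f y n x = tree_comp f \<eta> n x) (at \<eta> within S)"
    unfolding eventually_at_topological
  proof (intro exI conjI ballI impI)
    show "open {y::nat\<Rightarrow>nat. \<forall>i\<in>{..<n}. y (id i) \<in> {\<eta> i}}" by (rule op)
    show "\<eta> \<in> {y::nat\<Rightarrow>nat. \<forall>i\<in>{..<n}. y (id i) \<in> {\<eta> i}}" by simp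
    fix y assume "y \<in> {y::nat\<Rightarrow>nat. \<forall>i\<in>{..<n}. y (id i) \<in> {\<eta> i}}"
    then have "\<And>i. i < n \<Longrightarrow> y i = \<eta> i" by simp
    then show "tree_comp f y n x = tree_comp f \<eta> n x" using tc_agree[of n y \<eta> n f] by simp
  qed
  then show "((\<lambda>\<eta>. tree_comp f \<eta> n x) \<longlongrightarrow> tree_comp f \<eta> n x) (at \<eta> within S)"
    by (rule tendsto_eventually)
qed

lemma inf_codes_compact: "compact inf_codes"
proof -
  have "compactin (product_topology (\<lambda>i. euclidean) UNIV) (PiE UNIV (\<lambda>_::nat. {1::nat,2}))"
    by (subst compactin_PiE) (auto intro: finite_imp_compact)
  moreover have "PiE UNIV (\<lambda>_::nat. {1::nat,2}) = inf_codes"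
    by (auto simp: inf_codes_def PiE_def extensional_def)
  ultimately show ?thesis by (simp add: euclidean_product_topology)
qed


theorem mainTheorem3:
  fixes f :: "nat list \<Rightarrow> 'a::complete_space \<Rightarrow> 'a"
    and s :: "nat list \<Rightarrow> real"
    and C :: "'a set"
    and \<delta> :: "nat \<Rightarrow> real"
    and x :: 'a
  assumes cont: "\<And>k w. k \<ge> 1 \<Longrightarrow> w \<in> fin_codes k \<Longrightarrow> continuous_on UNIV (f w)"
    and C_compact: "compact C" and C_ne: "C \<noteq> {}"
    and C_inv: "\<And>k w. k \<ge> 1 \<Longrightarrow> w \<in> fin_codes k \<Longrightarrow> f w ` C \<subseteq> C"
    and lip: "\<And>k w. k \<ge> 1 \<Longrightarrow> w \<in> fin_codes k \<Longrightarrow> (s w)-lipschitz_on UNIV (f w)"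
    and summ: "summable (\<lambda>k. \<delta> (Suc k))"
    and prod_bound: "\<And>\<eta> k. \<eta> \<in> inf_codes \<Longrightarrow> k \<ge> 1 \<Longrightarrow>
        (\<Prod>i\<in>{1..k}. s (tau i \<eta>)) \<le> \<delta> k"
    and xC: "x \<in> C"
  shows "(\<forall>\<eta>\<in>inf_codes. convergent (\<lambda>k. tree_comp f \<eta> k x))
    \<and> compact (\<Union>\<eta>\<in>inf_codes. {lim (\<lambda>k. tree_comp f \<eta> k x)})
    \<and> (\<Union>\<eta>\<in>inf_codes. {lim (\<lambda>k. tree_comp f \<eta> k x)}) \<noteq> {}
    \<and> ((\<lambda>k. hausdorff_dist (\<Union>\<eta>\<in>inf_codes. {tree_comp f \<eta> k x})
                             (\<Union>\<eta>\<in>inf_codes. {lim (\<lambda>k. tree_comp f \<eta> k x)}))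
        \<longlonglongrightarrow> 0)"
proof -
  define F where "F k \<eta> = tree_comp f \<eta> k x" for k \<eta>
  define D where "D = diameter C"
  have bC: "bounded C" using C_compact compact_imp_bounded by blast
  have Dab: "dist a b \<le> D" if "a \<in> C" "b \<in> C" for a b
    unfolding D_def using diameter_bounded_bound[OF bC that] .
  have D0: "0 \<le> D" using Dab[OF xC xC] by simp
  define \<eta>0 where "\<eta>0 = (\<lambda>_::nat. 1::nat)"
  have eta0: "\<eta>0 \<in> inf_codes" by (simp add: \<eta>0_def inf_codes_def)
  have FC: "F k \<eta> \<in> C" if "\<eta> \<in> inf_codes" for k \<eta>
    unfolding F_def by (rule tc_C[OF C_inv that xC])
  have Pnn: "0 \<le> (\<Prod>i\<in>{1..k}. s (tau i \<eta>))" if "\<eta> \<in> inf_codes" for k \<eta>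
    using lipschitz_on_nonneg[OF tc_lip[OF lip that, where k=k]] .
  have dnn: "0 \<le> \<delta> k" if "k \<ge> 1" for k
    using Pnn[OF eta0, of k] prod_bound[OF eta0 that] by linarith
  have stepd: "dist (F (Suc k) \<eta>) (F k \<eta>) \<le> D * \<delta> k" if "\<eta> \<in> inf_codes" "k \<ge> 1" for k \<eta>
  proof -
    let ?y = "f (tau (Suc k) \<eta>) x"
    have "f (tau (Suc k) \<eta>) ` C \<subseteq> C" by (rule C_inv[of "Suc k"]) (auto intro: tau_fin that)
    then have yC: "?y \<in> C" using xC by blast
    have "F (Suc k) \<eta> = tree_comp f \<eta> k ?y" by (simp add: F_def)
    then have "dist (F (Suc k) \<eta>) (F k \<eta>) \<le> (\<Prod>i\<in>{1..k}. s (tau i \<eta>)) * dist ?y x"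
      unfolding F_def using lipschitz_onD[OF tc_lip[OF lip that(1), where k=k]] by simp
    also have "\<dots> \<le> \<delta> k * D"
      by (rule mult_mono) (use prod_bound[OF that] Dab[OF yC xC] dnn[OF that(2)] in auto)
    finally show ?thesis by (simp add: mult.commute)
  qed
  have cauchy_sum: "dist (F m \<eta>) (F n \<eta>) \<le> D * (\<Sum>k\<in>{n..<m}. \<delta> k)"
    if "\<eta> \<in> inf_codes" "1 \<le> n" "n \<le> m" for m n \<eta>
    using that(3)
  proof (induction m rule: dec_induct)
    case base then show ?case by simp
  next
    case (step m)
    have "dist (F (Suc m) \<eta>) (F n \<eta>) \<le> dist (F (Suc m) \<eta>) (F m \<eta>) + dist (F m \<eta>) (F n \<eta>)"
      by (rule dist_triangle)
    also have "\<dots> \<le> D * \<delta> m + D * (\<Sum>k\<in>{n..<m}. \<delta> k)"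
      using stepd[OF that(1), of m] step.IH step.hyps that(2) by (intro add_mono) auto
    finally show ?case using step.hyps by (simp add: algebra_simps)
  qed
  define e where "e j = \<delta> (Suc j)" for j
  define L where "L = suminf e"
  define P where "P q = (\<Sum>j<q. e j)" for q
  define \<epsilon> where "\<epsilon> n = D * (L - P (n - 1))" for n
  have se: "summable e" using summ unfolding e_def by simp
  have enn: "0 \<le> e j" for j using dnn[of "Suc j"] by (simp add: e_def)
  have PL: "P q \<le> L" for q
    unfolding P_def L_def by (rule sum_le_suminf[OF se]) (auto simp: enn)
  have eps0: "0 \<le> \<epsilon> n" for n using PL[of "n-1"] D0 by (simp add: \<epsilon>_def)
  have sum_bound: "(\<Sum>k\<in>{n..<m}. \<delta> k) \<le> L - P (n - 1)" if n1: "1 \<le> n" and nm: "n \<le> m" for n m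
  proof -
    obtain a where a: "n = Suc a" using n1 by (cases n) auto
    obtain b where b: "m = Suc b" using n1 nm by (cases m) auto
    have ab: "a \<le> b" using a b nm by simp
    have "(\<Sum>k\<in>{n..<m}. \<delta> k) = (\<Sum>j\<in>{a..<b}. e j)"
      unfolding a b e_def by (rule sum.shift_bounds_Suc_ivl)
    also have "\<dots> = P b - P a"
      using sum_diff_nat_ivl[of 0 a b e] ab by (simp add: P_def atLeast0LessThan)
    also have "\<dots> \<le> L - P a" using PL[of b] by simp
    finally show ?thesis using a by simp
  qed
  have cb: "dist (F m \<eta>) (F n \<eta>) \<le> \<epsilon> n" if "\<eta> \<in> inf_codes" "1 \<le> n" "n \<le> m" for m n \<eta>
    using cauchy_sum[OF that] mult_left_mono[OF sum_bound[OF that(2,3)] D0]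
    unfolding \<epsilon>_def by linarith
  have PlimL: "P \<longlonglongrightarrow> L" unfolding P_def L_def by (rule summable_LIMSEQ[OF se])
  have "(\<lambda>n. P (n - 1)) \<longlonglongrightarrow> L"
    by (rule LIMSEQ_imp_Suc) (simp add: PlimL)
  then have epslim: "\<epsilon> \<longlonglongrightarrow> 0"
    unfolding \<epsilon>_def by (auto intro!: tendsto_eq_intros)
  have conv: "convergent (\<lambda>k. F k \<eta>)" if eta: "\<eta> \<in> inf_codes" for \<eta>
  proof -
    have "Cauchy (\<lambda>k. F k \<eta>)"
    proof (rule metric_CauchyI)
      fix r :: real assume "r > 0"
      then obtain M where M: "\<forall>n\<ge>M. \<epsilon> n < r"
        using epslim by (metis (no_types, lifting) eventually_sequentially order_tendstoD(2))
      show "\<exists>M. \<forall>m\<ge>M. \<forall>n\<ge>M. dist (F m \<eta>) (F n \<eta>) < r"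
      proof (intro exI allI impI)
        fix m n assume "max M 1 \<le> m" "max M 1 \<le> n"
        then show "dist (F m \<eta>) (F n \<eta>) < r"
        proof (cases "n \<le> m")
          case True then show ?thesis using cb[OF eta, of n m] M \<open>max M 1 \<le> n\<close> by fastforce
        next
          case False then show ?thesis using cb[OF eta, of m n] M \<open>max M 1 \<le> m\<close>
            by (fastforce simp: dist_commute)
        qed
      qed
    qed
    then show ?thesis by (rule Cauchy_convergent)
  qed
  define \<gamma> where "\<gamma> \<eta> = lim (\<lambda>k. F k \<eta>)" for \<eta>
  have Flim: "(\<lambda>k. F k \<eta>) \<longlonglongrightarrow> \<gamma> \<eta>" if "\<eta> \<in> inf_codes" for \<eta>
    using conv[OF that] unfolding \<gamma>_def by (simp add: convergent_LIMSEQ_iff)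
  have Fg: "dist (F n \<eta>) (\<gamma> \<eta>) \<le> \<epsilon> n" if eta: "\<eta> \<in> inf_codes" "1 \<le> n" for n \<eta>
  proof (rule LIMSEQ_le_const2)
    show "(\<lambda>m. dist (F n \<eta>) (F m \<eta>)) \<longlonglongrightarrow> dist (F n \<eta>) (\<gamma> \<eta>)"
      by (intro tendsto_intros Flim[OF eta(1)])
    show "\<exists>N. \<forall>m\<ge>N. dist (F n \<eta>) (F m \<eta>) \<le> \<epsilon> n"
      using cb[OF eta] by (metis dist_commute)
  qed
  have ul: "uniform_limit inf_codes F \<gamma> sequentially"
  proof (rule uniform_limitI)
    fix r :: real assume "r > 0"
    then have "eventually (\<lambda>n. \<epsilon> n < r) sequentially" using epslim by (rule order_tendstoD(2)[rotated])
    moreover have "eventually (\<lambda>n. 1 \<le> n) sequentially" by (rule eventually_ge_at_top)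
    ultimately show "\<forall>\<^sub>F n in sequentially. \<forall>\<eta>\<in>inf_codes. dist (F n \<eta>) (\<gamma> \<eta>) < r"
      by eventually_elim (use Fg in fastforce)
  qed
  have gcont: "continuous_on inf_codes \<gamma>"
  proof (rule uniform_limit_theorem[OF _ ul])
    show "\<forall>\<^sub>F n in sequentially. continuous_on inf_codes (F n)"
      unfolding F_def by (simp add: tc_cont)
  qed simp
  have Ueq: "(\<Union>\<eta>\<in>inf_codes. {lim (\<lambda>k. tree_comp f \<eta> k x)}) = \<gamma> ` inf_codes"
    by (auto simp: \<gamma>_def F_def)
  have Aeq: "(\<Union>\<eta>\<in>inf_codes. {tree_comp f \<eta> k x}) = (\<lambda>\<eta>. F k \<eta>) ` inf_codes" for k
    by (auto simp: F_def)
  have hb: "0 \<le> hausdorff_dist ((\<lambda>\<eta>. F k \<eta>) ` inf_codes) (\<gamma> ` inf_codes)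
         \<and> hausdorff_dist ((\<lambda>\<eta>. F k \<eta>) ` inf_codes) (\<gamma> ` inf_codes) \<le> \<epsilon> k" if "1 \<le> k" for k
  proof -
    let ?A = "(\<lambda>\<eta>. F k \<eta>) ` inf_codes" and ?U = "\<gamma> ` inf_codes"
    have ne: "?A \<noteq> {}" "?U \<noteq> {}" using eta0 by auto
    have b1: "infdist a ?U \<le> \<epsilon> k" if "a \<in> ?A" for a
    proof -
      obtain \<eta> where "\<eta> \<in> inf_codes" "a = F k \<eta>" using \<open>a \<in> ?A\<close> by auto
      then show ?thesis using infdist_le[of "\<gamma> \<eta>" ?U a] Fg[of \<eta> k] \<open>1 \<le> k\<close> by force
    qed
    have b2: "infdist b ?A \<le> \<epsilon> k" if "b \<in> ?U" for b
    proof -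
      obtain \<eta> where "\<eta> \<in> inf_codes" "b = \<gamma> \<eta>" using \<open>b \<in> ?U\<close> by auto
      then show ?thesis using infdist_le[of "F k \<eta>" ?A b] Fg[of \<eta> k] \<open>1 \<le> k\<close>
        by (force simp: dist_commute)
    qed
    have s1: "(SUP a\<in>?A. infdist a ?U) \<le> \<epsilon> k" by (rule cSUP_least[OF ne(1)]) (use b1 in auto)
    have s2: "(SUP b\<in>?U. infdist b ?A) \<le> \<epsilon> k" by (rule cSUP_least[OF ne(2)]) (use b2 in auto)
    have "infdist (F k \<eta>0) ?U \<le> (SUP a\<in>?A. infdist a ?U)"
      by (rule cSUP_upper) (use eta0 b1 in \<open>auto intro!: bdd_aboveI2\<close>)
    then have l1: "0 \<le> (SUP a\<in>?A. infdist a ?U)" using infdist_nonneg[of "F k \<eta>0" ?U] by linarith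
    show ?thesis using s1 s2 l1 unfolding hausdorff_dist_def by auto
  qed
  have hlim: "(\<lambda>k. hausdorff_dist ((\<lambda>\<eta>. F k \<eta>) ` inf_codes) (\<gamma> ` inf_codes)) \<longlonglongrightarrow> 0"
  proof (rule tendsto_sandwich[OF _ _ tendsto_const epslim])
    show "\<forall>\<^sub>F k in sequentially. 0 \<le> hausdorff_dist ((\<lambda>\<eta>. F k \<eta>) ` inf_codes) (\<gamma> ` inf_codes)"
      using eventually_ge_at_top[of "1::nat"] by eventually_elim (use hb in auto)
    show "\<forall>\<^sub>F k in sequentially. hausdorff_dist ((\<lambda>\<eta>. F k \<eta>) ` inf_codes) (\<gamma> ` inf_codes) \<le> \<epsilon> k"
      using eventually_ge_at_top[of "1::nat"] by eventually_elim (use hb in auto)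
  qed
  have "compact (\<gamma> ` inf_codes)"
    by (rule compact_continuous_image[OF gcont inf_codes_compact])
  then show ?thesis
    unfolding Ueq Aeq using conv hlim eta0 by (auto simp: F_def)
qed

end
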